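(* Let $l\ge2$ and $r\ge3$ be integers, $\kappa\in\bigl(1-\frac{2(r-1)}{lr},1-\frac1l\bigr)$, $\lambda>0$, and set $c=r-\frac{2+r}{3-l(1-\kappa)}$ (so $c>0$). There exists $h_0>0$ such that for every $n$, every $\Gamma\in\mathcal B(l,r,n)$ which is a $(\lambda,\kappa)$ expander, every $0<h<h_0$, every choice of signs $h_i\in\{-h,+h\}$, every high-noise-solution $(\underline\eta,\underline{\widehat\eta})$ of the BP equations on $\Gamma$, and every polymer $\gamma\subset\Gamma$ with $|\gamma|<\lambda n$, $$|K(\gamma)|\le h^{\frac c2|\gamma|}.$$
   Context: $n\ge1$ is an integer with $m=nl/r$ an integer. $V$ is a set of $n$ variable nodes and $C$ a set of $m$ check nodes. $\mathcal B(l,r,n)$ is the set of simple bipartite graphs $\Gamma$ (no multiple edges) with vertex classes $V,C$ and edge set $E$, in which every variable node has degree $l$ and every check node has degree $r$. Letters $i,j$ denote variable nodes and $a,b$ check nodes; $\partial i$ and $\partial a$ denote neighbourhoods in $\Gamma$. Expander: for $\lambda,\kappa>0$, $\Gamma$ is a $(\lambda,\kappa)$ expander if every $\mathcal V\subset V$ with $|\mathcal V|<\lambda n$ satisfies $|\partial\mathcal V|\ge\kappa l|\mathcal V|$, where $\partial\mathcal V$ is the set of check nodes adjacent to at least one node of $\mathcal V$. Channel variables: $h>0$ is a parameter, and $h_i\in\{-h,+h\}$ for each $i\in V$. BP equations: real messages $\eta_{i\to a},\widehat\eta_{a\to i}$, one of each for every edge $(i,a)\in E$, satisfying $\eta_{i\to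 a}=h_i+\sum_{b\in\partial i\setminus a}\widehat\eta_{b\to i}$ and $\widehat\eta_{a\to i}=\tanh^{-1}\bigl(\prod_{j\in\partial a\setminus i}\tanh\eta_{j\to a}\bigr)$. A high-noise-solution is a solution such that, for a constant $A_0$ depending only on $l,r$, $|\eta_{i\to a}|\le h+(l-1)h^{r-1}+A_0h^r$ and $|\widehat\eta_{a\to i}|\le h^{r-1}+A_0h^r$ for every edge. Generalized loops and polymers: a generalized loop $g$ is a subgraph of $\Gamma$ (a set of edges of $\Gamma$ together with their endpoints) in which every vertex has induced degree at least $2$; the empty subgraph is allowed. $d_i(g)$, $d_a(g)$ denote induced degrees in $g$. A polymer $\gamma$ is a nonempty connected generalized loop; $|\gamma|$ is its number of vertices. Activities: with $m_i=\tanh\bigl(h_i+\sum_{a\in\partial i}\widehat\eta_{a\to i}\bigr)$, $K(\emptyset)=1$ and $K(g)=\prod_{i\in g\cap V}K_i\prod_{a\in g\cap C}K_a$, where $$K_i=\frac{(1-m_i)^{d_i(g)-1}+(-1)^{d_i(g)}(1+m_i)^{d_i(g)-1}}{2(1-m_i^2)^{d_i(g)-1}},$$ $$K_a=\prod_{i\in\partial a\cap g}\sqrt{\frac{1-\tanh^2\eta_{i\to a}}{1-\prod_{j\in\partial a\setminus i}\tanh^2\eta_{j\to a}}}\;\prod_{i\in\partial a\cap g^c}\tanh\eta_{i\to a}\;\cdot\;\frac{1+(-1)^{d_a(g)}\prod_{i\in\partial a}\tanh^{d_a(g)-1}\eta_{i\to a}}{1+\prod_{i\in\partial a}\tanh\eta_{i\to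 a}}\;\prod_{i\in\partial a\cap g}\sqrt{1-m_i^2},$$ where $\partial a\cap g$ is the set of $i\in\partial a$ with $(i,a)$ an edge of $g$, and $\partial a\cap g^c=\partial a\setminus(\partial a\cap g)$. *)

theory Defs
  imports Complex_Main
begin

text \<open>Variable nodes are the naturals i < n, check nodes the naturals a < m.
  A bipartite graph is a set E of pairs (i,a) (variable node i, check node a);
  being a set of pairs, it has no multiple edges.  A generalized loop is
  represented by its edge set G \<subseteq> E; its vertices are the endpoints.\<close>

definition vnbrs :: "(nat \<times> nat) set \<Rightarrow> nat \<Rightarrow> nat set" where
  "vnbrs E i = {a. (i, a) \<in> E}"

definition cnbrs :: "(nat \<times> nat) set \<Rightarrow> nat \<Rightarrow> nat set" where
  "cnbrs E a = {i. (i, a) \<in> E}"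

definition in_B :: "nat \<Rightarrow> nat \<Rightarrow> nat \<Rightarrow> nat \<Rightarrow> (nat \<times> nat) set \<Rightarrow> bool" where
  "in_B l r n m E \<longleftrightarrow> E \<subseteq> {..<n} \<times> {..<m}
     \<and> (\<forall>i<n. card (vnbrs E i) = l) \<and> (\<forall>a<m. card (cnbrs E a) = r)"

definition check_boundary :: "(nat \<times> nat) set \<Rightarrow> nat set \<Rightarrow> nat set" where
  "check_boundary E S = {a. \<exists>i\<in>S. (i, a) \<in> E}"

definition expander :: "nat \<Rightarrow> nat \<Rightarrow> (nat \<times> nat) set \<Rightarrow> real \<Rightarrow> real \<Rightarrow> bool" where
  "expander l n E lam kap \<longleftrightarrow> (\<forall>S. S \<subseteq> {..<n} \<longrightarrow> real (card S) < lam * real n \<longrightarrow>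
      real (card (check_boundary E S)) \<ge> kap * real l * real (card S))"

text \<open>eta i a = message variable i -> check a; etahat a i = message check a -> variable i.\<close>
definition BP_solution :: "(nat \<times> nat) set \<Rightarrow> (nat \<Rightarrow> real) \<Rightarrow> (nat \<Rightarrow> nat \<Rightarrow> real)
    \<Rightarrow> (nat \<Rightarrow> nat \<Rightarrow> real) \<Rightarrow> bool" where
  "BP_solution E hs eta etahat \<longleftrightarrow> (\<forall>(i, a)\<in>E.
      eta i a = hs i + (\<Sum>b\<in>vnbrs E i - {a}. etahat b i) \<and>
      etahat a i = artanh (\<Prod>j\<in>cnbrs E a - {i}. tanh (eta j a)))"

definition high_noise :: "nat \<Rightarrow> nat \<Rightarrow> real \<Rightarrow> real \<Rightarrow> (nat \<times> nat) set
    \<Rightarrow> (nat \<Rightarrow> nat \<Rightarrow> real) \<Rightarrow> (nat \<Rightarrow> nat \<Rightarrow> real) \<Rightarrow> bool" where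
  "high_noise l r A0 h E eta etahat \<longleftrightarrow> (\<forall>(i, a)\<in>E.
      \<bar>eta i a\<bar> \<le> h + (real l - 1) * h ^ (r - 1) + A0 * h ^ r \<and>
      \<bar>etahat a i\<bar> \<le> h ^ (r - 1) + A0 * h ^ r)"

definition gen_loop :: "(nat \<times> nat) set \<Rightarrow> (nat \<times> nat) set \<Rightarrow> bool" where
  "gen_loop E G \<longleftrightarrow> G \<subseteq> E \<and>
     (\<forall>(i, a)\<in>G. 2 \<le> card (vnbrs G i) \<and> 2 \<le> card (cnbrs G a))"

text \<open>Vertices: Inl i for variable nodes, Inr a for check nodes.\<close>
definition adj :: "(nat \<times> nat) set \<Rightarrow> ((nat + nat) \<times> (nat + nat)) set" where
  "adj G = {(Inl i, Inr a) | i a. (i, a) \<in> G} \<union> {(Inr a, Inl i) | i a. (i, a) \<in> G}"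

definition gverts :: "(nat \<times> nat) set \<Rightarrow> (nat + nat) set" where
  "gverts G = Inl ` fst ` G \<union> Inr ` snd ` G"

definition connected_sub :: "(nat \<times> nat) set \<Rightarrow> bool" where
  "connected_sub G \<longleftrightarrow> (\<forall>x\<in>gverts G. \<forall>y\<in>gverts G. (x, y) \<in> (adj G)\<^sup>*)"

definition polymer :: "(nat \<times> nat) set \<Rightarrow> (nat \<times> nat) set \<Rightarrow> bool" where
  "polymer E G \<longleftrightarrow> gen_loop E G \<and> G \<noteq> {} \<and> connected_sub G"

text \<open>|gamma| = number of vertices.\<close>
definition gsize :: "(nat \<times> nat) set \<Rightarrow> nat" where
  "gsize G = card (fst ` G) + card (snd ` G)"

definition magn :: "(nat \<times> nat) set \<Rightarrow> (nat \<Rightarrow> real) \<Rightarrow> (nat \<Rightarrow> nat \<Rightarrow> real) \<Rightarrow> nat \<Rightarrow> real" where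
  "magn E hs etahat i = tanh (hs i + (\<Sum>a\<in>vnbrs E i. etahat a i))"

definition K_var :: "real \<Rightarrow> nat \<Rightarrow> real" where
  "K_var mi d = ((1 - mi) ^ (d - 1) + (-1) ^ d * (1 + mi) ^ (d - 1)) / (2 * (1 - mi\<^sup>2) ^ (d - 1))"

definition K_chk :: "(nat \<times> nat) set \<Rightarrow> (nat \<times> nat) set \<Rightarrow> (nat \<Rightarrow> real)
    \<Rightarrow> (nat \<Rightarrow> nat \<Rightarrow> real) \<Rightarrow> (nat \<Rightarrow> nat \<Rightarrow> real) \<Rightarrow> nat \<Rightarrow> real" where
  "K_chk E G hs eta etahat a =
     (let d = card (cnbrs G a) in
      (\<Prod>i\<in>cnbrs G a. sqrt ((1 - (tanh (eta i a))\<^sup>2) /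
           (1 - (\<Prod>j\<in>cnbrs E a - {i}. (tanh (eta j a))\<^sup>2)))) *
      (\<Prod>i\<in>cnbrs E a - cnbrs G a. tanh (eta i a)) *
      ((1 + (-1) ^ d * (\<Prod>i\<in>cnbrs E a. tanh (eta i a) ^ (d - 1))) /
        (1 + (\<Prod>i\<in>cnbrs E a. tanh (eta i a)))) *
      (\<Prod>i\<in>cnbrs G a. sqrt (1 - (magn E hs etahat i)\<^sup>2)))"

definition activity :: "(nat \<times> nat) set \<Rightarrow> (nat \<times> nat) set \<Rightarrow> (nat \<Rightarrow> real)
    \<Rightarrow> (nat \<Rightarrow> nat \<Rightarrow> real) \<Rightarrow> (nat \<Rightarrow> nat \<Rightarrow> real) \<Rightarrow> real" where
  "activity E G hs eta etahat =
     (if G = {} then 1 else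
      (\<Prod>i\<in>fst ` G. K_var (magn E hs etahat i) (card (vnbrs G i))) *
      (\<Prod>a\<in>snd ` G. K_chk E G hs eta etahat a))"

end

theory Submission imports Defs begin
lemma tanh_le2_nonneg:
  fixes x :: real assumes "x \<ge> 0" shows "tanh x \<le> 2 * x"
proof -
  have e: "exp (-2*x) \<ge> 1 + (-2*x)" using exp_ge_add_one_self by blast
  have p: "1 + exp (-2*x) > 0" using exp_gt_zero[of "-2*x"] by linarith
  have "tanh x = (1 - exp (-2*x)) / (1 + exp (-2*x))" by (rule tanh_real_altdef)
  also have "\<dots> \<le> (1 - exp (-2*x)) / 1"
    using assms e p by (intro divide_left_mono) auto
  also have "\<dots> \<le> 2 * x" using e by simp
  finally show ?thesis .
qed

lemma abs_tanh_le2: fixes x :: real shows "\<bar>tanh x\<bar> \<le> 2 * \<bar>x\<bar>"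
  using tanh_le2_nonneg[of "\<bar>x\<bar>"] by (metis abs_ge_zero tanh_real_abs)

lemma abs_tanh_le1: fixes x :: real shows "\<bar>tanh x\<bar> \<le> 1"
  using tanh_real_bounds[of x] by auto

lemma abs_prod_le_pow:
  fixes f :: "'a \<Rightarrow> real"
  assumes "\<And>x. x \<in> A \<Longrightarrow> \<bar>f x\<bar> \<le> b"
  shows "\<bar>prod f A\<bar> \<le> b ^ card A"
proof (cases "finite A")
  case True
  have "\<bar>prod f A\<bar> = prod (\<lambda>x. \<bar>f x\<bar>) A" by (simp add: abs_prod)
  also have "\<dots> \<le> prod (\<lambda>x. b) A" using assms by (intro prod_mono) auto
  also have "\<dots> = b ^ card A" by simp
  finally show ?thesis .
qed simp

lemma K_var_bound:
  assumes "\<bar>mi\<bar> \<le> 1/2"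
  shows "\<bar>K_var mi d\<bar> \<le> 2 ^ (d - 1)"
proof -
  define k where "k = d - 1"
  have a1: "0 \<le> 1 - mi" "1 - mi \<le> 3/2" "0 \<le> 1 + mi" "1 + mi \<le> 3/2" using assms by auto
  have num: "\<bar>(1 - mi) ^ k + (-1) ^ d * (1 + mi) ^ k\<bar> \<le> 2 * (3/2) ^ k"
  proof -
    have "\<bar>(1 - mi) ^ k + (-1) ^ d * (1 + mi) ^ k\<bar> \<le> \<bar>(1 - mi) ^ k\<bar> + \<bar>(-1) ^ d * (1 + mi) ^ k\<bar>"
      by (rule abs_triangle_ineq)
    also have "\<dots> = (1 - mi) ^ k + (1 + mi) ^ k" using a1 by (simp add: abs_mult power_abs)
    also have "\<dots> \<le> (3/2) ^ k + (3/2) ^ k" using a1 by (intro add_mono power_mono) auto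
    finally show ?thesis by simp
  qed
  have sq: "3/4 \<le> 1 - mi\<^sup>2"
  proof -
    have "mi\<^sup>2 = \<bar>mi\<bar>\<^sup>2" by simp
    also have "\<dots> \<le> (1/2)\<^sup>2" using assms by (intro power_mono) auto
    also have "\<dots> = 1/4" by (simp add: power2_eq_square)
    finally show ?thesis by linarith
  qed
  have den: "2 * (3/4) ^ k \<le> 2 * (1 - mi\<^sup>2) ^ k" using sq by (intro mult_left_mono power_mono) auto
  have dpos: "0 < 2 * (3/4::real) ^ k" by simp
  have "\<bar>K_var mi d\<bar> = \<bar>(1 - mi) ^ k + (-1) ^ d * (1 + mi) ^ k\<bar> / (2 * (1 - mi\<^sup>2) ^ k)"
  proof -
    have "0 \<le> (1 - mi\<^sup>2) ^ k" using sq by simp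
    then have "\<bar>2 * (1 - mi\<^sup>2) ^ k\<bar> = 2 * (1 - mi\<^sup>2) ^ k" by simp
    then show ?thesis unfolding K_var_def k_def by (simp add: abs_divide)
  qed
  also have "\<dots> \<le> (2 * (3/2) ^ k) / (2 * (3/4) ^ k)"
    by (rule frac_le) (use num den dpos in auto)
  also have "\<dots> = 2 ^ k"
  proof -
    have "(3/2::real) ^ k = 2 ^ k * (3/4) ^ k" by (simp add: power_mult_distrib[symmetric])
    then show ?thesis by simp
  qed
  finally show ?thesis unfolding k_def .
qed

lemma prod_sq_le:
  fixes t :: "'a \<Rightarrow> real"
  assumes "finite A" "A \<noteq> {}" "\<And>j. j \<in> A \<Longrightarrow> \<bar>t j\<bar> \<le> 1/2"
  shows "0 \<le> (\<Prod>j\<in>A. (t j)\<^sup>2) \<and> (\<Prod>j\<in>A. (t j)\<^sup>2) \<le> 1/4"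
proof
  show "0 \<le> (\<Prod>j\<in>A. (t j)\<^sup>2)" by (intro prod_nonneg) auto
  have b: "\<And>j. j \<in> A \<Longrightarrow> \<bar>(t j)\<^sup>2\<bar> \<le> 1/4"
  proof -
    fix j assume "j \<in> A"
    then have "\<bar>t j\<bar> \<le> 1/2" using assms by auto
    then have "\<bar>t j\<bar>\<^sup>2 \<le> (1/2)\<^sup>2" by (intro power_mono) auto
    then show "\<bar>(t j)\<^sup>2\<bar> \<le> 1/4" by (simp add: power2_eq_square)
  qed
  have "\<bar>(\<Prod>j\<in>A. (t j)\<^sup>2)\<bar> \<le> (1/4) ^ card A" by (rule abs_prod_le_pow) (use b in auto)
  also have "\<dots> \<le> (1/4) ^ 1" using assms by (intro power_decreasing) (auto simp: Suc_le_eq card_gt_0_iff)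
  finally show "(\<Prod>j\<in>A. (t j)\<^sup>2) \<le> 1/4" by simp
qed

lemma K_chk_bound:
  assumes fin: "finite (cnbrs E a)" and cardT: "card (cnbrs E a) = r" and r3: "r \<ge> 3"
    and sub: "cnbrs G a \<subseteq> cnbrs E a"
    and t: "\<And>i. i \<in> cnbrs E a \<Longrightarrow> \<bar>tanh (eta i a)\<bar> \<le> 4*h"
    and h0: "0 \<le> h" and h1: "4*h \<le> 1/2"
  shows "\<bar>K_chk E G hs eta etahat a\<bar> \<le> 4 * 2^r * (4*h)^(r - card (cnbrs G a))"
proof -
  define T where "T = cnbrs E a"
  define D where "D = cnbrs G a"
  define tt where "tt = (\<lambda>i. tanh (eta i a))"
  define d where "d = card D"
  have finD: "finite D" using fin sub finite_subset unfolding D_def by blast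
  have t2: "\<And>i. i \<in> T \<Longrightarrow> \<bar>tt i\<bar> \<le> 1/2" using t h1 unfolding T_def tt_def by force
  have dr: "d \<le> r" using card_mono[OF fin sub] cardT unfolding d_def D_def by simp
  define P1 where "P1 = (\<Prod>i\<in>D. sqrt ((1 - (tt i)\<^sup>2) / (1 - (\<Prod>j\<in>T - {i}. (tt j)\<^sup>2))))"
  define P2 where "P2 = (\<Prod>i\<in>T - D. tt i)"
  define P3 where "P3 = (1 + (-1) ^ d * (\<Prod>i\<in>T. tt i ^ (d - 1))) / (1 + (\<Prod>i\<in>T. tt i))"
  define P4 where "P4 = (\<Prod>i\<in>D. sqrt (1 - (magn E hs etahat i)\<^sup>2))"
  have K: "K_chk E G hs eta etahat a = P1 * P2 * P3 * P4"
    unfolding K_chk_def Let_def P1_def P2_def P3_def P4_def T_def D_def tt_def d_def by simp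
  have b1: "\<bar>P1\<bar> \<le> 2 ^ r"
  proof -
    have "\<bar>P1\<bar> \<le> 2 ^ card D" unfolding P1_def
    proof (rule abs_prod_le_pow)
      fix i assume iD: "i \<in> D"
      have iT: "i \<in> T" using iD sub unfolding D_def T_def by auto
      have ne: "T - {i} \<noteq> {}"
      proof
        assume "T - {i} = {}"
        then have "T \<subseteq> {i}" by auto
        then have "card T \<le> 1" using card_mono[of "{i}" T] by simp
        then show False using cardT r3 unfolding T_def by simp
      qed
      have P: "0 \<le> (\<Prod>j\<in>T - {i}. (tt j)\<^sup>2) \<and> (\<Prod>j\<in>T - {i}. (tt j)\<^sup>2) \<le> 1/4"
        by (rule prod_sq_le) (use fin ne t2 in \<open>auto simp: T_def\<close>)
      have ti: "\<bar>tt i\<bar> \<le> 1" using t2 iT by force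
      have q1: "0 \<le> 1 - (tt i)\<^sup>2" "1 - (tt i)\<^sup>2 \<le> 1"
        using ti by (auto simp: abs_square_le_1)
      have "(1 - (tt i)\<^sup>2) / (1 - (\<Prod>j\<in>T - {i}. (tt j)\<^sup>2)) \<le> 1 / (3/4)"
        using P q1 by (intro frac_le) auto
      then have "(1 - (tt i)\<^sup>2) / (1 - (\<Prod>j\<in>T - {i}. (tt j)\<^sup>2)) \<le> 4" by (rule order_trans) simp
      moreover have nn: "0 \<le> (1 - (tt i)\<^sup>2) / (1 - (\<Prod>j\<in>T - {i}. (tt j)\<^sup>2))"
        using P q1 by (intro divide_nonneg_nonneg) auto
      ultimately have "sqrt ((1 - (tt i)\<^sup>2) / (1 - (\<Prod>j\<in>T - {i}. (tt j)\<^sup>2))) \<le> sqrt 4"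
        by (intro real_sqrt_le_mono) auto
      then show "\<bar>sqrt ((1 - (tt i)\<^sup>2) / (1 - (\<Prod>j\<in>T - {i}. (tt j)\<^sup>2)))\<bar> \<le> 2" using nn by simp
    qed
    also have "\<dots> \<le> 2 ^ r" using dr unfolding d_def by (intro power_increasing) auto
    finally show ?thesis .
  qed
  have b2: "\<bar>P2\<bar> \<le> (4*h) ^ (r - d)"
  proof -
    have "\<bar>P2\<bar> \<le> (4*h) ^ card (T - D)" unfolding P2_def
      by (rule abs_prod_le_pow) (use t in \<open>auto simp: T_def tt_def\<close>)
    also have "card (T - D) = r - d" using card_Diff_subset[OF finD sub[folded D_def T_def]] cardT
      unfolding d_def T_def by simp
    finally show ?thesis .
  qed
  have b3: "\<bar>P3\<bar> \<le> 4"
  proof -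
    have n1: "\<bar>(\<Prod>i\<in>T. tt i ^ (d - 1))\<bar> \<le> 1"
    proof -
      have "\<bar>(\<Prod>i\<in>T. tt i ^ (d - 1))\<bar> \<le> 1 ^ card T"
      proof (rule abs_prod_le_pow)
        fix i assume "i \<in> T"
        then have "\<bar>tt i\<bar> \<le> 1" using t2 by force
        then show "\<bar>tt i ^ (d - 1)\<bar> \<le> 1" by (simp add: power_abs power_le_one)
      qed
      then show ?thesis by simp
    qed
    have num: "\<bar>1 + (-1) ^ d * (\<Prod>i\<in>T. tt i ^ (d - 1))\<bar> \<le> 2"
    proof -
      have "\<bar>(-1::real) ^ d\<bar> = 1" by (simp add: power_abs)
      then have "\<bar>(-1) ^ d * (\<Prod>i\<in>T. tt i ^ (d - 1))\<bar> \<le> 1" using n1 by (simp add: abs_mult)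
      then show ?thesis by linarith
    qed
    have d1: "\<bar>(\<Prod>i\<in>T. tt i)\<bar> \<le> 1/2"
    proof -
      have "\<bar>(\<Prod>i\<in>T. tt i)\<bar> \<le> (1/2) ^ card T" by (rule abs_prod_le_pow) (use t2 in auto)
      also have "\<dots> \<le> (1/2) ^ 1" using cardT r3 unfolding T_def by (intro power_decreasing) auto
      finally show ?thesis by simp
    qed
    have den: "1/2 \<le> 1 + (\<Prod>i\<in>T. tt i)" using d1 by linarith
    have "\<bar>P3\<bar> = \<bar>1 + (-1) ^ d * (\<Prod>i\<in>T. tt i ^ (d - 1))\<bar> / (1 + (\<Prod>i\<in>T. tt i))"
      unfolding P3_def using den by (simp add: abs_divide)
    also have "\<dots> \<le> 2 / (1/2)" using num den by (intro frac_le) auto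
    finally show ?thesis by simp
  qed
  have b4: "\<bar>P4\<bar> \<le> 1"
  proof -
    have "\<bar>P4\<bar> \<le> 1 ^ card D" unfolding P4_def
    proof (rule abs_prod_le_pow)
      fix i
      have "\<bar>magn E hs etahat i\<bar> \<le> 1" unfolding magn_def by (rule abs_tanh_le1)
      then have "0 \<le> 1 - (magn E hs etahat i)\<^sup>2" "1 - (magn E hs etahat i)\<^sup>2 \<le> 1"
        by (auto simp: abs_square_le_1)
      then show "\<bar>sqrt (1 - (magn E hs etahat i)\<^sup>2)\<bar> \<le> 1" by simp
    qed
    then show ?thesis by simp
  qed
  have "\<bar>K_chk E G hs eta etahat a\<bar> = \<bar>P1\<bar> * \<bar>P2\<bar> * \<bar>P3\<bar> * \<bar>P4\<bar>" by (simp add: K abs_mult)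
  also have "\<dots> \<le> 2 ^ r * (4*h) ^ (r - d) * 4 * 1"
    using b1 b2 b3 b4 h0 by (intro mult_mono) auto
  finally show ?thesis unfolding d_def D_def by simp
qed

lemma comb_ineq:
  fixes v k e al r :: real
  assumes "e \<le> k + al * v" "2 * v \<le> e" "al < 3" "r \<ge> 3" "al > 1" "v \<ge> 0" "k \<ge> 0"
  shows "(r - (2 + r) / (3 - al)) * (v + k) \<le> r * k - e"
proof -
  have p: "3 - al > 0" using assms by simp
  have eq: "(3 - al) * (r * k - e) - (3 - al) * ((r - (2 + r) / (3 - al)) * (v + k))
      = (r - 1 + al) * (e - 2 * v) + (r + 2) * (k + al * v - e)"
    using p by (simp add: field_simps)
  have "0 \<le> (r - 1 + al) * (e - 2 * v) + (r + 2) * (k + al * v - e)"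
    using assms by (intro add_nonneg_nonneg mult_nonneg_nonneg) auto
  then have "(3 - al) * ((r - (2 + r) / (3 - al)) * (v + k)) \<le> (3 - al) * (r * k - e)"
    using eq by linarith
  then show ?thesis using p by (simp add: mult_le_cancel_left_pos)
qed

lemma card_var_sum:
  assumes "finite G"
  shows "card G = (\<Sum>i\<in>fst ` G. card (vnbrs G i))"
proof -
  have "G = Sigma (fst ` G) (vnbrs G)" by (force simp: vnbrs_def)
  moreover have "\<forall>i\<in>fst ` G. finite (vnbrs G i)"
  proof
    fix i show "finite (vnbrs G i)"
      using finite_imageI[OF assms, of snd] by (rule finite_subset[rotated]) (force simp: vnbrs_def)
  qed
  ultimately show ?thesis using assms by (metis card_SigmaI finite_imageI)
qed

lemma card_chk_sum:
  assumes "finite G"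
  shows "card G = (\<Sum>a\<in>snd ` G. card (cnbrs G a))"
proof -
  define sw where "sw = (\<lambda>(x::nat, y::nat). (y, x))"
  have inj: "inj_on sw G" unfolding sw_def by (auto simp: inj_on_def)
  have "sw ` G = Sigma (snd ` G) (cnbrs G)" unfolding sw_def by (force simp: cnbrs_def)
  moreover have "\<forall>a\<in>snd ` G. finite (cnbrs G a)"
  proof
    fix a show "finite (cnbrs G a)"
      using finite_imageI[OF assms, of fst] by (rule finite_subset[rotated]) (force simp: cnbrs_def)
  qed
  ultimately have "card (sw ` G) = (\<Sum>a\<in>snd ` G. card (cnbrs G a))" using assms by simp
  then show ?thesis using card_image[OF inj] by simp
qed

theorem mainTheorem8:
  fixes l r :: nat and kap lam A0 :: real
  assumes "l \<ge> 2" and "r \<ge> 3"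
    and "1 - 2 * (real r - 1) / (real l * real r) < kap" and "kap < 1 - 1 / real l"
    and "lam > 0"
  shows "\<exists>h0>0. \<forall>n m E h hs eta etahat G.
     n \<ge> 1 \<longrightarrow> n * l = m * r \<longrightarrow> in_B l r n m E \<longrightarrow> expander l n E lam kap \<longrightarrow>
     0 < h \<longrightarrow> h < h0 \<longrightarrow> (\<forall>i<n. hs i \<in> {-h, h}) \<longrightarrow>
     BP_solution E hs eta etahat \<longrightarrow> high_noise l r A0 h E eta etahat \<longrightarrow>
     polymer E G \<longrightarrow> real (gsize G) < lam * real n \<longrightarrow>
     \<bar>activity E G hs eta etahat\<bar> \<le>
       h powr ((real r - (2 + real r) / (3 - real l * (1 - kap))) / 2 * real (gsize G))"
proof -
  note l2 = assms(1) and r3 = assms(2) and kap1 = assms(3) and kap2 = assms(4)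
  define al where "al = real l * (1 - kap)"
  define c where "c = real r - (2 + real r) / (3 - al)"
  have lpos: "real l > 0" using l2 by simp
  have rpos: "real r > 0" using r3 by simp
  have al1: "al > 1"
  proof -
    have "1 / real l < 1 - kap" using kap2 by simp
    then have "real l * (1 / real l) < real l * (1 - kap)" using lpos by (intro mult_strict_left_mono) auto
    then show ?thesis unfolding al_def using lpos by simp
  qed
  have al2: "al * real r < 2 * (real r - 1)"
  proof -
    have "1 - kap < 2 * (real r - 1) / (real l * real r)" using kap1 by simp
    then have "(real l * real r) * (1 - kap) < (real l * real r) * (2 * (real r - 1) / (real l * real r))"
      using lpos rpos by (intro mult_strict_left_mono) auto
    moreover have "(real l * real r) * (2 * (real r - 1) / (real l * real r)) = 2 * (real r - 1)"
      using lpos rpos by simp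
    ultimately show ?thesis unfolding al_def by (simp add: algebra_simps)
  qed
  have al3: "al < 3"
  proof -
    have "al * real r < 2 * real r" using al2 by simp
    then have "al < 2" using rpos by simp
    then show ?thesis by simp
  qed
  have cpos: "c > 0"
  proof -
    have "c = (2 * real r - al * real r - 2) / (3 - al)" unfolding c_def using al3
      by (simp add: field_simps)
    then show ?thesis using al2 al3 by simp
  qed
  define B :: real where "B = 2 ^ l * 4 * 8 ^ r"
  have p2: "(1::real) \<le> 2 ^ l" and p8: "(1::real) \<le> 8 ^ r" by (simp_all add: one_le_power)
  have q: "(1::real) \<le> 4 * 8 ^ r" using p8 by linarith
  have Bl: "2 ^ l \<le> B" unfolding B_def
    using mult_left_mono[OF q, of "2 ^ l"] by (simp add: mult.assoc)
  have Br: "4 * 8 ^ r \<le> B" unfolding B_def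
    using mult_left_mono[OF p2, of "4 * 8 ^ r"] by (simp add: mult.commute mult.left_commute)
  have B1: "B \<ge> 1" using Bl p2 by linarith
  define h0 where "h0 = min (1/8) (min (1 / (real l + \<bar>A0\<bar>)) (min (1 / (real l * (1 + \<bar>A0\<bar>))) ((1/B) powr (2/c))))"
  have h0pos: "h0 > 0" unfolding h0_def using lpos B1 by (auto intro!: add_pos_nonneg)
  show ?thesis
  proof (intro exI[of _ h0] conjI allI impI)
    show "0 < h0" by (rule h0pos)
    fix n m E h hs eta etahat G
    assume n1: "n \<ge> 1" and nm: "n * l = m * r" and inB: "in_B l r n m E"
      and exp: "expander l n E lam kap" and hpos: "0 < h" and hh0: "h < h0"
      and hsb: "\<forall>i<n. hs i \<in> {-h, h}" and bp: "BP_solution E hs eta etahat"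
      and hn: "high_noise l r A0 h E eta etahat" and pol: "polymer E G"
      and gs: "real (gsize G) < lam * real n"
    have ha: "h < 1/8" "h < 1 / (real l + \<bar>A0\<bar>)" "h < 1 / (real l * (1 + \<bar>A0\<bar>))"
      "h < (1/B) powr (2/c)" using hh0 unfolding h0_def by auto
    have Esub: "E \<subseteq> {..<n} \<times> {..<m}" using inB unfolding in_B_def by simp
    have finE: "finite E" using Esub finite_subset by blast
    have GE: "G \<subseteq> E" and Gne: "G \<noteq> {}" using pol unfolding polymer_def gen_loop_def by auto
    have finG: "finite G" using GE finE finite_subset by blast
    define S where "S = fst ` G"
    define C where "C = snd ` G"
    define v where "v = card S"
    define k where "k = card C"
    define e where "e = card G"
    have finS: "finite S" "finite C" unfolding S_def C_def using finG by auto
    have vE: "\<And>i. i < n \<Longrightarrow> card (vnbrs E i) = l" using inB unfolding in_B_def by simp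
    have cE: "\<And>a. a < m \<Longrightarrow> card (cnbrs E a) = r" using inB unfolding in_B_def by simp
    have Sn: "S \<subseteq> {..<n}" using GE Esub unfolding S_def by force
    have Cm: "C \<subseteq> {..<m}" using GE Esub unfolding C_def by force
    have finvE: "\<And>i. finite (vnbrs E i)"
      using finite_imageI[OF finE, of snd] by (rule finite_subset[rotated]) (force simp: vnbrs_def)
    have fincE: "\<And>a. finite (cnbrs E a)"
      using finite_imageI[OF finE, of fst] by (rule finite_subset[rotated]) (force simp: cnbrs_def)
    have vsub: "\<And>i. vnbrs G i \<subseteq> vnbrs E i" using GE unfolding vnbrs_def by auto
    have csub: "\<And>a. cnbrs G a \<subseteq> cnbrs E a" using GE unfolding cnbrs_def by auto
    have dS: "\<And>i. i \<in> S \<Longrightarrow> 2 \<le> card (vnbrs G i)"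
      using pol unfolding polymer_def gen_loop_def S_def by force
    have eS: "e = (\<Sum>i\<in>S. card (vnbrs G i))" unfolding e_def S_def by (rule card_var_sum[OF finG])
    have eC: "e = (\<Sum>a\<in>C. card (cnbrs G a))" unfolding e_def C_def by (rule card_chk_sum[OF finG])
    have e2v: "2 * v \<le> e"
    proof -
      have "(\<Sum>i\<in>S. 2) \<le> (\<Sum>i\<in>S. card (vnbrs G i))" using dS by (intro sum_mono) auto
      then show ?thesis using eS unfolding v_def by simp
    qed
    have dl: "\<And>i. i \<in> S \<Longrightarrow> card (vnbrs G i) \<le> l"
      using vE Sn card_mono[OF finvE vsub] by force
    have dr: "\<And>a. a \<in> C \<Longrightarrow> card (cnbrs G a) \<le> r"
      using cE Cm card_mono[OF fincE csub] by force
    have bd_sub: "check_boundary E S \<subseteq> C \<union> (\<Union>i\<in>S. vnbrs E i - vnbrs G i)"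
      unfolding check_boundary_def C_def S_def vnbrs_def by force
    have bd_card: "card (check_boundary E S) \<le> k + (\<Sum>i\<in>S. l - card (vnbrs G i))"
    proof -
      have "card (check_boundary E S) \<le> card (C \<union> (\<Union>i\<in>S. vnbrs E i - vnbrs G i))"
        using bd_sub finS finvE by (intro card_mono) auto
      also have "\<dots> \<le> card C + card (\<Union>i\<in>S. vnbrs E i - vnbrs G i)" by (rule card_Un_le)
      also have "card (\<Union>i\<in>S. vnbrs E i - vnbrs G i) \<le> (\<Sum>i\<in>S. card (vnbrs E i - vnbrs G i))"
        using finS by (intro card_UN_le) auto
      also have "\<dots> = (\<Sum>i\<in>S. l - card (vnbrs G i))"
      proof (rule sum.cong)
        fix i assume "i \<in> S"
        then show "card (vnbrs E i - vnbrs G i) = l - card (vnbrs G i)"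
          using card_Diff_subset[OF finite_subset[OF vsub finvE] vsub] vE Sn by force
      qed simp
      finally show ?thesis unfolding k_def by simp
    qed
    have bd_real: "real (card (check_boundary E S)) \<le> real k + real l * real v - real e"
    proof -
      have "real (\<Sum>i\<in>S. l - card (vnbrs G i)) = (\<Sum>i\<in>S. real l - real (card (vnbrs G i)))"
        using dl by (simp add: of_nat_diff)
      also have "\<dots> = real l * real v - real e"
        unfolding v_def eS by (simp add: sum_subtractf)
      finally show ?thesis using bd_card by linarith
    qed
    have gsz: "gsize G = v + k" unfolding gsize_def v_def k_def S_def C_def by simp
    have vlt: "real v < lam * real n" using gs gsz by simp
    have expS: "kap * real l * real v \<le> real (card (check_boundary E S))"
      using exp Sn vlt unfolding expander_def v_def by blast
    have eb: "real e \<le> real k + al * real v"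
      using expS bd_real unfolding al_def by (simp add: algebra_simps)
    define N where "N = (\<Sum>a\<in>C. r - card (cnbrs G a))"
    have Nreal: "real N = real r * real k - real e"
    proof -
      have "real N = (\<Sum>a\<in>C. real r - real (card (cnbrs G a)))"
        unfolding N_def using dr by (simp add: of_nat_diff)
      also have "\<dots> = real r * real k - real e" unfolding k_def eC by (simp add: sum_subtractf)
      finally show ?thesis .
    qed
    have Nc: "c * (real v + real k) \<le> real N"
      unfolding Nreal c_def
      by (rule comb_ineq) (use eb e2v al1 al3 r3 in auto)
    have h1: "h \<le> 1" using ha by simp
    have hpow: "\<And>j. 2 \<le> j \<Longrightarrow> h ^ j \<le> h\<^sup>2"
      using hpos h1 by (intro power_decreasing) auto
    have etab: "\<And>i a. (i, a) \<in> E \<Longrightarrow> \<bar>tanh (eta i a)\<bar> \<le> 4 * h"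
    proof -
      fix i a assume ia: "(i, a) \<in> E"
      have b: "\<bar>eta i a\<bar> \<le> h + (real l - 1) * h ^ (r - 1) + A0 * h ^ r"
        using hn ia unfolding high_noise_def by auto
      have x1: "(real l - 1) * h ^ (r - 1) \<le> (real l - 1) * h\<^sup>2"
        using l2 hpow[of "r - 1"] r3 by (intro mult_left_mono) auto
      have x2: "A0 * h ^ r \<le> \<bar>A0\<bar> * h\<^sup>2"
      proof -
        have "A0 * h ^ r \<le> \<bar>A0\<bar> * h ^ r" using hpos by (intro mult_right_mono) auto
        also have "\<dots> \<le> \<bar>A0\<bar> * h\<^sup>2" using hpow[of r] r3 by (intro mult_left_mono) auto
        finally show ?thesis .
      qed
      have x3: "(real l - 1 + \<bar>A0\<bar>) * h \<le> 1"
      proof -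
        have p: "real l + \<bar>A0\<bar> > 0" using lpos by linarith
        have "(real l + \<bar>A0\<bar>) * h \<le> 1" using ha(2) p by (simp add: field_simps)
        moreover have "(real l - 1 + \<bar>A0\<bar>) * h \<le> (real l + \<bar>A0\<bar>) * h" using hpos by simp
        ultimately show ?thesis by linarith
      qed
      have "(real l - 1 + \<bar>A0\<bar>) * h\<^sup>2 \<le> h"
        using mult_right_mono[OF x3, of h] hpos by (simp add: power2_eq_square mult.assoc)
      then have "\<bar>eta i a\<bar> \<le> 2 * h" using b x1 x2 by (simp add: algebra_simps)
      then show "\<bar>tanh (eta i a)\<bar> \<le> 4 * h" using abs_tanh_le2[of "eta i a"] by linarith
    qed
    have magb: "\<And>i. i \<in> S \<Longrightarrow> \<bar>magn E hs etahat i\<bar> \<le> 1/2"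
    proof -
      fix i assume iS: "i \<in> S"
      have iN: "i < n" using iS Sn by auto
      have hsi: "\<bar>hs i\<bar> = h" using hsb iN hpos by auto
      have eb1: "\<And>a. a \<in> vnbrs E i \<Longrightarrow> \<bar>etahat a i\<bar> \<le> (1 + \<bar>A0\<bar>) * h\<^sup>2"
      proof -
        fix a assume "a \<in> vnbrs E i"
        then have ia: "(i, a) \<in> E" unfolding vnbrs_def by simp
        have b: "\<bar>etahat a i\<bar> \<le> h ^ (r - 1) + A0 * h ^ r"
          using hn ia unfolding high_noise_def by auto
        have x1: "h ^ (r - 1) \<le> h\<^sup>2" using hpow[of "r - 1"] r3 by auto
        have "A0 * h ^ r \<le> \<bar>A0\<bar> * h ^ r" using hpos by (intro mult_right_mono) auto
        also have "\<dots> \<le> \<bar>A0\<bar> * h\<^sup>2" using hpow[of r] r3 by (intro mult_left_mono) auto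
        finally show "\<bar>etahat a i\<bar> \<le> (1 + \<bar>A0\<bar>) * h\<^sup>2" using b x1 by (simp add: algebra_simps)
      qed
      have sb: "\<bar>\<Sum>a\<in>vnbrs E i. etahat a i\<bar> \<le> real l * ((1 + \<bar>A0\<bar>) * h\<^sup>2)"
      proof -
        have "\<bar>\<Sum>a\<in>vnbrs E i. etahat a i\<bar> \<le> (\<Sum>a\<in>vnbrs E i. \<bar>etahat a i\<bar>)" by (rule sum_abs)
        also have "\<dots> \<le> (\<Sum>a\<in>vnbrs E i. (1 + \<bar>A0\<bar>) * h\<^sup>2)" using eb1 by (intro sum_mono) auto
        also have "\<dots> = real l * ((1 + \<bar>A0\<bar>) * h\<^sup>2)" using vE[OF iN] by simp
        finally show ?thesis .
      qed
      have x3: "real l * (1 + \<bar>A0\<bar>) * h \<le> 1"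
      proof -
        have p: "real l * (1 + \<bar>A0\<bar>) > 0" using lpos by (simp add: add_pos_nonneg)
        show ?thesis using ha(3) p by (simp add: field_simps)
      qed
      have "real l * ((1 + \<bar>A0\<bar>) * h\<^sup>2) \<le> h"
        using mult_right_mono[OF x3, of h] hpos by (simp add: power2_eq_square mult.assoc)
      then have "\<bar>hs i + (\<Sum>a\<in>vnbrs E i. etahat a i)\<bar> \<le> 2 * h" using hsi sb by linarith
      then have "\<bar>magn E hs etahat i\<bar> \<le> 4 * h"
        unfolding magn_def using abs_tanh_le2 by (smt (verit))
      then show "\<bar>magn E hs etahat i\<bar> \<le> 1/2" using ha(1) by linarith
    qed
    have kv: "\<And>i. i \<in> S \<Longrightarrow> \<bar>K_var (magn E hs etahat i) (card (vnbrs G i))\<bar> \<le> B"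
    proof -
      fix i assume iS: "i \<in> S"
      have "\<bar>K_var (magn E hs etahat i) (card (vnbrs G i))\<bar> \<le> 2 ^ (card (vnbrs G i) - 1)"
        by (rule K_var_bound[OF magb[OF iS]])
      also have "\<dots> \<le> 2 ^ l" using dl[OF iS] by (intro power_increasing) auto
      finally show "\<bar>K_var (magn E hs etahat i) (card (vnbrs G i))\<bar> \<le> B" using Bl by linarith
    qed
    have kc: "\<And>a. a \<in> C \<Longrightarrow> \<bar>K_chk E G hs eta etahat a\<bar> \<le> B * h ^ (r - card (cnbrs G a))"
    proof -
      fix a assume aC: "a \<in> C"
      have aM: "a < m" using aC Cm by auto
      have "\<bar>K_chk E G hs eta etahat a\<bar> \<le> 4 * 2^r * (4*h)^(r - card (cnbrs G a))"
        by (rule K_chk_bound[OF fincE cE[OF aM] r3 csub])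
           (use etab hpos ha(1) in \<open>auto simp: cnbrs_def\<close>)
      also have "\<dots> = 4 * 2^r * 4^(r - card (cnbrs G a)) * h^(r - card (cnbrs G a))"
        by (simp add: power_mult_distrib)
      also have "\<dots> \<le> 4 * 2^r * 4^r * h^(r - card (cnbrs G a))"
        using hpos by (intro mult_right_mono mult_left_mono power_increasing) auto
      also have "4 * 2^r * 4^r = (4 * 8^r :: real)"
        by (simp add: power_mult_distrib[symmetric])
      also have "(4 * 8^r) * h^(r - card (cnbrs G a)) \<le> B * h^(r - card (cnbrs G a))"
        using Br hpos by (intro mult_right_mono) auto
      finally show "\<bar>K_chk E G hs eta etahat a\<bar> \<le> B * h ^ (r - card (cnbrs G a))" .
    qed
    have act: "\<bar>activity E G hs eta etahat\<bar> \<le> B ^ (v + k) * h ^ N"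
    proof -
      have "\<bar>activity E G hs eta etahat\<bar> =
          \<bar>\<Prod>i\<in>S. K_var (magn E hs etahat i) (card (vnbrs G i))\<bar> * \<bar>\<Prod>a\<in>C. K_chk E G hs eta etahat a\<bar>"
        unfolding activity_def S_def C_def using Gne by (simp add: abs_mult)
      also have "\<dots> \<le> B ^ v * (\<Prod>a\<in>C. B * h ^ (r - card (cnbrs G a)))"
      proof (rule mult_mono)
        show "\<bar>\<Prod>i\<in>S. K_var (magn E hs etahat i) (card (vnbrs G i))\<bar> \<le> B ^ v"
          unfolding v_def by (rule abs_prod_le_pow) (rule kv)
        show "\<bar>\<Prod>a\<in>C. K_chk E G hs eta etahat a\<bar> \<le> (\<Prod>a\<in>C. B * h ^ (r - card (cnbrs G a)))"
          unfolding abs_prod using kc by (intro prod_mono) auto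
      qed (use B1 in auto)
      also have "(\<Prod>a\<in>C. B * h ^ (r - card (cnbrs G a))) = B ^ k * h ^ N"
        unfolding N_def k_def by (simp add: prod.distrib power_sum)
      finally show ?thesis by (simp add: power_add)
    qed
    have hc: "h powr (c/2) \<le> 1/B"
    proof -
      have "h powr (c/2) \<le> ((1/B) powr (2/c)) powr (c/2)"
        using ha(4) hpos cpos by (intro powr_mono2) auto
      also have "\<dots> = 1/B" using cpos B1 by (simp add: powr_powr)
      finally show ?thesis .
    qed
    have mono: "\<And>x y. x \<le> y \<Longrightarrow> B ^ (v + k) * x \<le> B ^ (v + k) * y"
      using B1 by (intro mult_left_mono) auto
    have "\<bar>activity E G hs eta etahat\<bar> \<le> B ^ (v + k) * h ^ N" by (rule act)
    also have "h ^ N = h powr (real N)" using hpos by (simp add: powr_realpow)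
    also have "h powr (real N) \<le> h powr (c * (real v + real k))"
      using Nc hpos h1 by (intro powr_mono') auto
    also have "h powr (c * (real v + real k)) = (h powr (c/2)) ^ (v + k) * h powr (c / 2 * real (v + k))"
    proof -
      have "(h powr (c/2)) ^ (v + k) = h powr (c/2 * real (v + k))"
        using hpos by (simp add: powr_realpow[symmetric] powr_powr mult.commute)
      then show ?thesis using hpos by (simp add: powr_add[symmetric] algebra_simps)
    qed
    also have "B ^ (v + k) * ((h powr (c/2)) ^ (v + k) * h powr (c / 2 * real (v + k)))
        = (B * h powr (c/2)) ^ (v + k) * h powr (c / 2 * real (v + k))"
      by (simp add: power_mult_distrib)
    also have "\<dots> \<le> 1 * h powr (c / 2 * real (v + k))"
    proof (rule mult_right_mono)
      have "B * h powr (c/2) \<le> B * (1/B)" using hc B1 by (intro mult_left_mono) auto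
      then have "B * h powr (c/2) \<le> 1" using B1 by simp
      then show "(B * h powr (c/2)) ^ (v + k) \<le> 1" using B1 by (intro power_le_one) auto
    qed simp
    finally show "\<bar>activity E G hs eta etahat\<bar> \<le>
       h powr ((real r - (2 + real r) / (3 - real l * (1 - kap))) / 2 * real (gsize G))"
      unfolding gsz c_def al_def using mono by (simp add: mult_ac)
  qed
qed

end
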